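(* Let $p\geq1$ and let $(E,d)$ be a separable, locally compact geodesic space. For every $J\in\mathbb{N}^*$ and nonnegative weights $(\lambda_j)_{1\leq j\leq J}$ with $\sum_j\lambda_j=1$, there exists a Borel map $T:E^J\to E$ such that for every $(x_1,\dots,x_J)\in E^J$, $T(x_1,\dots,x_J)$ is a minimizer of $x\mapsto\sum_{j=1}^J\lambda_j d^p(x,x_j)$ over $E$.
   Context: A geodesic space is a complete metric space $(E,d)$ in which every two points $x,y$ have a mid-point, i.e. a point $z$ with $d(x,z)=d(z,y)=\tfrac12 d(x,y)$. *)

theory Defs
  imports "HOL-Analysis.Analysis"
begin

definition geodesic_space :: "'a::metric_space itself \<Rightarrow> bool" where
  "geodesic_space _ \<longleftrightarrow> complete (UNIV :: 'a set) \<and>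
     (\<forall>x y :: 'a. \<exists>z. dist x z = dist x y / 2 \<and> dist z y = dist x y / 2)"

end

theory Submission
  imports Defs
begin


lemma approx_aux:
  fixes e :: real
  assumes mid: "\<forall>x y::'a::metric_space. \<exists>z. dist x z = dist x y / 2 \<and> dist z y = dist x y / 2"
    and e: "e > 0"
  shows "\<forall>x y::'a. \<forall>s. 0 \<le> s \<longrightarrow> s \<le> dist x y \<longrightarrow> dist x y \<le> 2^n * e \<longrightarrow>
     (\<exists>z. dist x z \<le> s \<and> dist z y \<le> dist x y - s + e)"
proof (induction n)
  case 0
  show ?case
  proof (intro allI impI)
    fix x y :: 'a and s :: real
    assume "0 \<le> s" "s \<le> dist x y" "dist x y \<le> 2^0 * e"
    then show "\<exists>z. dist x z \<le> s \<and> dist z y \<le> dist x y - s + e"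
      by (intro exI[of _ x]) auto
  qed
next
  case (Suc n)
  show ?case
  proof (intro allI impI)
    fix x y :: 'a and s :: real
    assume s0: "0 \<le> s" and s1: "s \<le> dist x y" and d: "dist x y \<le> 2^Suc n * e"
    obtain m where m1: "dist x m = dist x y / 2" and m2: "dist m y = dist x y / 2"
      using mid by blast
    have dm: "dist x y / 2 \<le> 2^n * e" using d by simp
    show "\<exists>z. dist x z \<le> s \<and> dist z y \<le> dist x y - s + e"
    proof (cases "s \<le> dist x y / 2")
      case True
      then obtain z where z1: "dist x z \<le> s" and z2: "dist z m \<le> dist x m - s + e"
        using Suc.IH s0 m1 dm by metis
      have "dist z y \<le> dist z m + dist m y" by (rule dist_triangle)
      then show ?thesis using z1 z2 m1 m2 by (intro exI[of _ z]) auto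
    next
      case False
      then obtain z where z1: "dist m z \<le> s - dist x y / 2" and z2: "dist z y \<le> dist m y - (s - dist x y / 2) + e"
        using Suc.IH[rule_format, of "s - dist x y / 2" m y] s1 m2 dm by auto
      have "dist x z \<le> dist x m + dist m z" by (rule dist_triangle)
      then show ?thesis using z1 z2 m1 m2 by (intro exI[of _ z]) auto
    qed
  qed
qed

lemma approx_point:
  fixes x y :: "'a::metric_space"
  assumes mid: "\<forall>x y::'a::metric_space. \<exists>z. dist x z = dist x y / 2 \<and> dist z y = dist x y / 2"
    and "0 \<le> s" "s \<le> dist x y" "e > 0"
  shows "\<exists>z. dist x z \<le> s \<and> dist z y \<le> dist x y - s + e"
proof -
  obtain n where "dist x y / e < 2^n" using real_arch_pow[of 2] by auto
  then have "dist x y \<le> 2^n * e" using \<open>e>0\<close> by (simp add: field_simps)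
  from approx_aux[OF mid \<open>e>0\<close>, where n=n, rule_format, OF assms(2,3) this] show ?thesis .
qed

lemma proper_space:
  fixes x :: "'a::metric_space"
  assumes mid: "\<forall>x y::'a. \<exists>z. dist x z = dist x y / 2 \<and> dist z y = dist x y / 2"
    and cpl: "complete (UNIV::'a set)"
    and lc: "\<forall>y::'a. \<exists>\<rho>>0. compact (cball y \<rho>)"
  shows "compact (cball x r)"
proof (rule ccontr)
  assume nc: "\<not> compact (cball x r)"
  have down: "compact (cball x r')" if "r' \<le> r''" "compact (cball x r'')" for r' r''
  proof -
    have "cball x r' = cball x r'' \<inter> cball x r'" using that(1) by auto
    then show ?thesis using that(2) by (metis compact_Int_closed closed_cball)
  qed
  define S where "S = {t. 0 \<le> t \<and> compact (cball x t)}"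
  have S0: "0 \<in> S" unfolding S_def by simp
  have Sr: "t < r" if "t \<in> S" for t
  proof (rule ccontr)
    assume "\<not> t < r"
    then have "r \<le> t" by simp
    with that have "compact (cball x r)" using down unfolding S_def by auto
    with nc show False by simp
  qed
  have bdd: "bdd_above S" using Sr by (meson bdd_aboveI less_le_not_le)
  define R where "R = Sup S"
  have R0: "R \<ge> 0" unfolding R_def using S0 bdd by (meson cSup_upper)
  have Rupper: "t \<le> R" if "t \<in> S" for t using that bdd R_def by (simp add: cSup_upper)
  have below: "compact (cball x t)" if "t < R" for t
  proof -
    obtain s where "s \<in> S" "t < s" using less_cSupE[of t S] \<open>t < R\<close> S0 unfolding R_def by blast
    then show ?thesis using down[of t s] unfolding S_def by auto
  qed
  have cR: "compact (cball x R)"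
    unfolding compact_eq_totally_bounded
  proof (intro conjI allI impI)
    show "complete (cball x R)" by (rule complete_closed_subset[OF closed_cball _ cpl]) simp
  next
    fix e :: real assume e: "e > 0"
    show "\<exists>k. finite k \<and> cball x R \<subseteq> (\<Union>c\<in>k. ball c e)"
    proof (cases "R \<le> e/4")
      case True
      then show ?thesis using e by (intro exI[of _ "{x}"]) auto
    next
      case False
      define r' where "r' = R - e/4"
      have r'0: "r' > 0" "r' < R" using False e unfolding r'_def by auto
      have "compact (cball x r')" using below r'0 by simp
      then obtain k where k: "finite k" "cball x r' \<subseteq> (\<Union>c\<in>k. ball c (e/4))"
        using e unfolding compact_eq_totally_bounded by (meson divide_pos_pos zero_less_numeral)
      have "cball x R \<subseteq> (\<Union>c\<in>k. ball c e)"
      proof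
        fix y assume y: "y \<in> cball x R"
        show "y \<in> (\<Union>c\<in>k. ball c e)"
        proof (cases "dist x y \<le> r'")
          case True
          then obtain c where "c \<in> k" "dist c y < e/4" using k by auto
          then have "dist c y < e" using e by auto
          then show ?thesis using \<open>c \<in> k\<close> by auto
        next
          case False
          obtain z where z1: "dist x z \<le> r'" and z2: "dist z y \<le> dist x y - r' + e/4"
            using approx_point[OF mid, of r' x y "e/4"] r'0 False e by auto
          obtain c where c: "c \<in> k" "dist c z < e/4" using k z1 by auto
          have "dist c y \<le> dist c z + dist z y" by (rule dist_triangle)
          also have "\<dots> < e" using c z2 y e unfolding r'_def by auto
          finally show ?thesis using c by auto
        qed
      qed
      then show ?thesis using k by blast
    qed
  qed
  have "\<exists>\<rho>. \<forall>y::'a. \<rho> y > 0 \<and> compact (cball y (\<rho> y))" using lc by (rule choice)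
  then obtain \<rho> where \<rho>: "\<And>y::'a. \<rho> y > 0 \<and> compact (cball y (\<rho> y))" by blast
  obtain k where k: "k \<subseteq> cball x R" "finite k" "cball x R \<subseteq> (\<Union>y\<in>k. ball y (\<rho> y / 2))"
  proof (rule compactE_image[OF cR, of "cball x R" "\<lambda>y. ball y (\<rho> y / 2)"])
    show "cball x R \<subseteq> (\<Union>y\<in>cball x R. ball y (\<rho> y / 2))"
      using \<rho> by (auto intro!: bexI)
  qed auto
  have kne: "k \<noteq> {}" using k(3) R0 by auto
  define \<epsilon> where "\<epsilon> = Min ((\<lambda>y. \<rho> y / 2) ` k)"
  have \<epsilon>0: "\<epsilon> > 0" unfolding \<epsilon>_def using k(2) kne \<rho> by (subst Min_gr_iff) auto
  have \<epsilon>le: "\<epsilon> \<le> \<rho> y / 2" if "y \<in> k" for y unfolding \<epsilon>_def using k(2) that by (intro Min_le) auto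
  have sub: "cball x (R + \<epsilon>/2) \<subseteq> (\<Union>y\<in>k. cball y (\<rho> y))"
  proof
    fix w assume w: "w \<in> cball x (R + \<epsilon>/2)"
    show "w \<in> (\<Union>y\<in>k. cball y (\<rho> y))"
    proof (cases "dist x w \<le> R")
      case True
      then obtain y where "y \<in> k" "dist y w < \<rho> y / 2" using k(3) by auto
      then have "w \<in> cball y (\<rho> y)" using \<rho>[of y] by auto
      then show ?thesis using \<open>y \<in> k\<close> by blast
    next
      case False
      obtain z where z1: "dist x z \<le> R" and z2: "dist z w \<le> dist x w - R + \<epsilon>/2"
        using approx_point[OF mid, of R x w "\<epsilon>/2"] R0 False \<epsilon>0 by auto
      obtain y where y: "y \<in> k" "dist y z < \<rho> y / 2" using k(3) z1 by auto
      have "dist y w \<le> dist y z + dist z w" by (rule dist_triangle)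
      also have "\<dots> \<le> \<rho> y" using y z2 w \<epsilon>le[OF y(1)] by auto
      finally have "w \<in> cball y (\<rho> y)" by simp
      then show ?thesis using y by blast
    qed
  qed
  have "compact (\<Union>y\<in>k. cball y (\<rho> y))" using k(2) \<rho> by (intro compact_UN) auto
  then have "compact (cball x (R + \<epsilon>/2))"
    using sub by (metis compact_Int_closed closed_cball inf.absorb_iff2)
  then have "R + \<epsilon>/2 \<in> S" unfolding S_def using R0 \<epsilon>0 by auto
  then show False using Rupper \<epsilon>0 by fastforce
qed



primrec Tseq :: "(nat \<Rightarrow> 'a::metric_space) \<Rightarrow> ('x \<Rightarrow> 'a \<Rightarrow> bool) \<Rightarrow> nat \<Rightarrow> 'x \<Rightarrow> 'a" where
  "Tseq d Q 0 xs = d (LEAST k. \<exists>z. dist (d k) z \<le> 1 \<and> Q xs z)"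
| "Tseq d Q (Suc n) xs = d (LEAST k. (\<exists>z. dist (d k) z \<le> (1/2)^Suc n \<and> Q xs z)
        \<and> dist (d k) (Tseq d Q n xs) \<le> 3 * (1/2)^Suc n)"

lemma measurable_selection:
  fixes Q :: "'x::topological_space \<Rightarrow> 'a::metric_space \<Rightarrow> bool" and d :: "nat \<Rightarrow> 'a"
  assumes dense: "\<And>a e. e > 0 \<Longrightarrow> \<exists>k. dist (d k) a < e"
    and ex: "\<And>xs. \<exists>z. Q xs z"
    and cpl: "complete (UNIV::'a set)"
    and closedA: "\<And>k r. closed {xs. \<exists>z. dist (d k) z \<le> r \<and> Q xs z}"
    and closedQ: "\<And>xs. closed {z. Q xs z}"
  shows "\<exists>T. T \<in> borel_measurable borel \<and> (\<forall>xs. Q xs (T xs))"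
proof -
  define h :: real where "h = 1/2"
  have suc: "(\<exists>z. dist (Tseq d Q (Suc n) xs) z \<le> (1/2)^Suc n \<and> Q xs z)
     \<and> dist (Tseq d Q (Suc n) xs) (Tseq d Q n xs) \<le> 3 * (1/2)^Suc n"
    if hyp: "\<exists>z. dist (Tseq d Q n xs) z \<le> (1/2)^n \<and> Q xs z" for n xs
  proof -
    obtain z where z: "dist (Tseq d Q n xs) z \<le> (1/2)^n" "Q xs z" using hyp by blast
    obtain k where k: "dist (d k) z < (1/2)^Suc n" using dense[of "(1/2)^Suc n" z] by auto
    have "dist (d k) (Tseq d Q n xs) \<le> dist (d k) z + dist z (Tseq d Q n xs)" by (rule dist_triangle)
    also have "\<dots> \<le> 3 * (1/2)^Suc n" using k z by (simp add: dist_commute)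
    finally have "\<exists>k. (\<exists>z. dist (d k) z \<le> (1/2)^Suc n \<and> Q xs z)
        \<and> dist (d k) (Tseq d Q n xs) \<le> 3 * (1/2)^Suc n" using less_imp_le[OF k] z(2) by blast
    from LeastI_ex[OF this] show ?thesis by simp
  qed
  have inv: "\<exists>z. dist (Tseq d Q n xs) z \<le> (1/2)^n \<and> Q xs z" for n xs
  proof (induction n)
    case 0
    obtain z where z: "Q xs z" using ex by blast
    obtain k where k: "dist (d k) z < 1" using dense[of 1 z] by auto
    then have "\<exists>k. \<exists>z. dist (d k) z \<le> 1 \<and> Q xs z" using z less_imp_le by blast
    from LeastI_ex[OF this] show ?case by simp
  next
    case (Suc n)
    then show ?case using suc by blast
  qed
  have stp: "dist (Tseq d Q (Suc n) xs) (Tseq d Q n xs) \<le> 3 * (1/2)^Suc n" for n xs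
    using suc inv by blast
  have cb: "dist (Tseq d Q m xs) (Tseq d Q (m+k) xs) \<le> 3*(1/2)^m - 3*(1/2)^(m+k)" for m k xs
  proof (induction k)
    case 0 then show ?case by simp
  next
    case (Suc k)
    have "dist (Tseq d Q m xs) (Tseq d Q (m + Suc k) xs) \<le>
      dist (Tseq d Q m xs) (Tseq d Q (m+k) xs) + dist (Tseq d Q (Suc (m+k)) xs) (Tseq d Q (m+k) xs)"
      by (simp add: dist_triangle dist_commute)
    also have "\<dots> \<le> 3*(1/2)^m - 3*(1/2)^(m+k) + 3 * (1/2)^Suc (m+k)"
      using Suc stp[of "m+k" xs] by linarith
    also have "\<dots> = 3*(1/2)^m - 3*(1/2)^(m + Suc k)" by simp
    finally show ?case .
  qed
  have bound: "dist (Tseq d Q m xs) (Tseq d Q n xs) \<le> 3*(1/2)^min m n" for m n xs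
  proof (cases "m \<le> n")
    case True
    then have "n = m + (n - m)" by simp
    then have "dist (Tseq d Q m xs) (Tseq d Q n xs) \<le> 3*(1/2)^m - 3*(1/2)^(m+(n-m))"
      using cb[where m=m and k="n-m" and xs=xs] by simp
    also have "\<dots> \<le> 3*(1/2)^m" by simp
    finally show ?thesis using True by (simp add: min_def)
  next
    case False
    then have "m = n + (m - n)" by simp
    then have "dist (Tseq d Q n xs) (Tseq d Q m xs) \<le> 3*(1/2)^n - 3*(1/2)^(n+(m-n))"
      using cb[where m=n and k="m-n" and xs=xs] by simp
    also have "\<dots> \<le> 3*(1/2)^n" by simp
    finally show ?thesis using False by (simp add: min_def dist_commute)
  qed
  have cauchy: "Cauchy (\<lambda>n. Tseq d Q n xs)" for xs
    unfolding Cauchy_def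
  proof (intro allI impI)
    fix e :: real assume e: "e > 0"
    obtain M where M: "(1/2::real)^M < e/3" using real_arch_pow_inv[of "e/3" "1/2"] e by auto
    show "\<exists>M. \<forall>m\<ge>M. \<forall>n\<ge>M. dist (Tseq d Q m xs) (Tseq d Q n xs) < e"
    proof (intro exI allI impI)
      fix m n assume "m \<ge> M" "n \<ge> M"
      then have "M \<le> min m n" by simp
      then have "(1/2::real)^min m n \<le> (1/2)^M" by (rule power_decreasing) auto
      then show "dist (Tseq d Q m xs) (Tseq d Q n xs) < e" using bound[where m=m and n=n and xs=xs] M by linarith
    qed
  qed
  define Tl where "Tl xs = lim (\<lambda>n. Tseq d Q n xs)" for xs
  have conv: "(\<lambda>n. Tseq d Q n xs) \<longlonglongrightarrow> Tl xs" for xs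
  proof -
    obtain l where "(\<lambda>n. Tseq d Q n xs) \<longlonglongrightarrow> l"
      using completeE[OF cpl _ cauchy[of xs]] by blast
    then show ?thesis unfolding Tl_def by (simp add: limI)
  qed
  define A where "A k r = {xs. \<exists>z. dist (d k) z \<le> r \<and> Q xs z}" for k r
  have predA: "(\<lambda>xs. \<exists>z. dist (d k) z \<le> r \<and> Q xs z) \<in> measurable borel (count_space UNIV)" for k r
  proof -
    have "{xs \<in> space borel. \<exists>z. dist (d k) z \<le> r \<and> Q xs z} \<in> sets borel"
      using borel_closed[OF closedA[of k r]] by simp
    then show ?thesis by (rule pred_def[THEN iffD2])
  qed
  have dmeas: "d \<in> measurable (count_space UNIV) borel" by simp
  have meas: "Tseq d Q n \<in> borel_measurable borel" for n
  proof (induction n)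
    case 0
    have "(\<lambda>xs. LEAST k. \<exists>z. dist (d k) z \<le> 1 \<and> Q xs z) \<in> measurable borel (count_space UNIV)"
      by (rule measurable_Least) (rule predA)
    from measurable_compose[OF this dmeas] show ?case
      by (simp add: Tseq.simps(1)[abs_def] del: Tseq.simps)
  next
    case (Suc n)
    have dk: "(\<lambda>xs. dist (d k) (Tseq d Q n xs)) \<in> borel_measurable borel" for k
    proof -
      have "dist (d k) \<in> borel_measurable borel"
        by (rule borel_measurable_continuous_onI) (intro continuous_intros)
      from measurable_compose[OF Suc this] show ?thesis by simp
    qed
    have pk: "(\<lambda>xs. dist (d k) (Tseq d Q n xs) \<le> 3 * (1/2)^Suc n) \<in> measurable borel (count_space UNIV)" for k
      using borel_measurable_le[OF dk[of k] borel_measurable_const[of "3 * (1/2)^Suc n"]]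
      by (intro pred_def[THEN iffD2]) simp
    have "(\<lambda>xs. LEAST k. (\<exists>z. dist (d k) z \<le> (1/2)^Suc n \<and> Q xs z)
        \<and> dist (d k) (Tseq d Q n xs) \<le> 3 * (1/2)^Suc n) \<in> measurable borel (count_space UNIV)"
      by (rule measurable_Least) (intro pred_intros_logic predA pk)
    from measurable_compose[OF this dmeas] show ?case
      by (simp add: Tseq.simps(2)[abs_def] del: Tseq.simps)
  qed
  have Tlm: "Tl \<in> borel_measurable borel"
    by (rule borel_measurable_LIMSEQ_metric[OF meas conv])
  have "Q xs (Tl xs)" for xs
  proof -
    have "\<forall>n. \<exists>z. dist (Tseq d Q n xs) z \<le> (1/2)^n \<and> Q xs z" using inv by blast
    then obtain zs where zs: "\<And>n. dist (Tseq d Q n xs) (zs n) \<le> (1/2)^n \<and> Q xs (zs n)" by metis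
    have "(\<lambda>n. dist (zs n) (Tl xs)) \<longlonglongrightarrow> 0"
    proof (rule Lim_null_comparison)
      show "\<forall>\<^sub>F n in sequentially. norm (dist (zs n) (Tl xs)) \<le> (1/2)^n + dist (Tseq d Q n xs) (Tl xs)"
      proof (rule always_eventually, rule allI)
        fix n
        have "dist (zs n) (Tl xs) \<le> dist (zs n) (Tseq d Q n xs) + dist (Tseq d Q n xs) (Tl xs)"
          by (rule dist_triangle)
        then show "norm (dist (zs n) (Tl xs)) \<le> (1/2)^n + dist (Tseq d Q n xs) (Tl xs)"
          using zs[of n] by (simp add: dist_commute)
      qed
      have "(\<lambda>n. dist (Tseq d Q n xs) (Tl xs)) \<longlonglongrightarrow> 0" by (rule tendsto_dist_iff[THEN iffD1, OF conv[of xs]])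
      then show "(\<lambda>n. (1/2::real)^n + dist (Tseq d Q n xs) (Tl xs)) \<longlonglongrightarrow> 0"
        using tendsto_add[OF LIMSEQ_power_zero[of "1/2::real"]] by simp
    qed
    then have "zs \<longlonglongrightarrow> Tl xs" by (rule tendsto_dist_iff[THEN iffD2])
    from closed_sequentially[OF closedQ[of xs] _ this] zs show ?thesis by blast
  qed
  with Tlm show ?thesis by blast
qed



lemma cont_F:
  fixes f :: "'b::topological_space \<Rightarrow> 'n \<Rightarrow> 'a::metric_space" and g :: "'b \<Rightarrow> 'a"
    and lam :: "'n \<Rightarrow> real"
  assumes "p > 0" "continuous_on S f" "continuous_on S g"
  shows "continuous_on S (\<lambda>t. \<Sum>j\<in>UNIV. lam j * dist (g t) (f t j) powr p)"
proof -
  have c: "continuous_on S (\<lambda>t. f t j)" for j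
    by (rule continuous_on_product_then_coordinatewise[OF assms(2)])
  show ?thesis
    by (intro continuous_on_sum continuous_on_mult continuous_on_const continuous_on_powr'
        continuous_on_dist c assms(3)) (use assms(1) in auto)
qed

lemma exists_min:
  fixes lam :: "'n::finite \<Rightarrow> real" and xs :: "'n \<Rightarrow> 'a::metric_space"
  assumes proper: "\<And>x::'a. \<And>r. compact (cball x r)" and p: "p \<ge> 1"
    and lam: "\<And>j. lam j \<ge> 0" and s1: "(\<Sum>j\<in>UNIV. lam j) = 1"
  shows "\<exists>z. \<forall>y. (\<Sum>j\<in>UNIV. lam j * dist z (xs j) powr p) \<le> (\<Sum>j\<in>UNIV. lam j * dist y (xs j) powr p)"
proof -
  define F where "F y = (\<Sum>j\<in>UNIV. lam j * dist y (xs j) powr p)" for y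
  have "\<exists>j. lam j > 0"
  proof (rule ccontr)
    assume "\<not> (\<exists>j. lam j > 0)"
    then have "\<forall>j. lam j = 0" using lam by (meson antisym not_less)
    then have "(\<Sum>j\<in>UNIV. lam j) = 0" by simp
    with s1 show False by simp
  qed
  then obtain j0 where j0: "lam j0 > 0" by blast
  define M where "M = F (xs j0)"
  define R where "R = max 1 (M / lam j0) + 1"
  have R1: "R > 1" unfolding R_def by simp
  have cont: "continuous_on (cball (xs j0) R) F"
    unfolding F_def using p
    by (intro cont_F[where f="\<lambda>_. xs" and g="\<lambda>y. y", simplified]) (auto intro: continuous_on_const continuous_on_id)
  obtain z where z: "z \<in> cball (xs j0) R" "\<forall>y\<in>cball (xs j0) R. F z \<le> F y"
    using continuous_attains_inf[OF proper _ cont] R1 by fastforce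
  have FzM: "F z \<le> M" unfolding M_def using z(2) R1 by simp
  have Fnn: "0 \<le> lam j * dist y (xs j) powr p" for j y using lam[of j] by simp
  have "F z \<le> F y" for y
  proof (cases "y \<in> cball (xs j0) R")
    case True with z show ?thesis by auto
  next
    case False
    then have d: "dist (xs j0) y > R" by simp
    then have d1: "dist y (xs j0) \<ge> 1" "dist y (xs j0) > M / lam j0" unfolding R_def by (auto simp: dist_commute)
    have "dist y (xs j0) powr 1 \<le> dist y (xs j0) powr p" using powr_mono[OF p d1(1)] .
    then have pw: "dist y (xs j0) \<le> dist y (xs j0) powr p" using d1 by simp
    have "M < lam j0 * dist y (xs j0)" using d1(2) j0 by (simp add: pos_divide_less_eq mult.commute)
    also have "\<dots> \<le> lam j0 * dist y (xs j0) powr p" using pw j0 by (simp add: mult_left_mono)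
    also have "\<dots> \<le> F y" unfolding F_def
      by (rule member_le_sum) (auto intro: Fnn)
    finally show ?thesis using FzM by simp
  qed
  then show ?thesis unfolding F_def by blast
qed

theorem mainTheorem7:
  fixes p :: real and lam :: "'n::finite \<Rightarrow> real"
  assumes "p \<ge> 1"
    and "geodesic_space TYPE('a::metric_space)"
    and "separable_space (euclidean :: 'a topology)"
    and "locally_compact_space (euclidean :: 'a topology)"
    and "\<And>j. lam j \<ge> 0"
    and "(\<Sum>j\<in>UNIV. lam j) = 1"
  shows "\<exists>T :: ('n \<Rightarrow> 'a) \<Rightarrow> 'a. T \<in> borel_measurable borel \<and>
           (\<forall>xs y. (\<Sum>j\<in>UNIV. lam j * dist (T xs) (xs j) powr p)
                   \<le> (\<Sum>j\<in>UNIV. lam j * dist y (xs j) powr p))"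
proof -
  have p0: "p > 0" using assms(1) by simp
  have cpl: "complete (UNIV::'a set)"
    and mid: "\<forall>x y::'a. \<exists>z. dist x z = dist x y / 2 \<and> dist z y = dist x y / 2"
    using assms(2) unfolding geodesic_space_def by blast+
  have lc: "\<forall>y::'a. \<exists>\<rho>>0. compact (cball y \<rho>)"
  proof
    fix y :: 'a
    have "\<forall>x\<in>topspace (euclidean::'a topology). \<exists>U K. openin (euclidean::'a topology) U \<and> compactin euclidean K \<and> x \<in> U \<and> U \<subseteq> K"
      using assms(4) unfolding locally_compact_space_def .
    moreover have "y \<in> topspace (euclidean :: 'a topology)" by simp
    ultimately obtain U K where UK0: "openin euclidean U" "compactin euclidean K" "y \<in> U" "U \<subseteq> K"
      by blast
    have UK1: "open U" using UK0(1) open_openin by blast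
    have UK2: "compact K" using UK0(2) compactin_euclidean_iff by blast
    note UK = UK1 UK2 UK0(3,4)
    obtain e where e: "e > 0" "ball y e \<subseteq> U" using UK(1,3) open_contains_ball by blast
    have "cball y (e/2) \<subseteq> ball y e" using e(1) by (auto simp: subset_iff)
    then have sub: "cball y (e/2) \<subseteq> K" using e(2) UK(4) by blast
    have "compact (K \<inter> cball y (e/2))" using UK(2) by (rule compact_Int_closed) simp
    then have "compact (cball y (e/2))" using sub by (simp add: inf.absorb2)
    then show "\<exists>\<rho>>0. compact (cball y \<rho>)" using e by (intro exI[of _ "e/2"]) auto
  qed
  have proper: "\<And>x::'a. \<And>r. compact (cball x r)"
    using proper_space[OF mid cpl lc] by blast
  obtain C :: "'a set" where C: "countable C" "closure C = UNIV"
    using assms(3) unfolding separable_space_def by auto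
  have Cne: "C \<noteq> {}" using C(2) by auto
  define d where "d = from_nat_into C"
  have dense: "\<exists>k. dist (d k) a < e" if epos: "e > 0" for a e
  proof -
    have "a \<in> closure C" using C(2) by simp
    then obtain c where c: "c \<in> C" "dist c a < e" using epos closure_approachable by blast
    then have "c \<in> range d" unfolding d_def using range_from_nat_into[OF Cne C(1)] by simp
    then show ?thesis using c by auto
  qed
  define F where "F xs y = (\<Sum>j\<in>UNIV. lam j * dist y (xs j) powr p)" for xs :: "'n \<Rightarrow> 'a" and y
  define Q where "Q xs z = (\<forall>y. F xs z \<le> F xs y)" for xs z
  have ex: "\<exists>z. Q xs z" for xs
    unfolding Q_def F_def using exists_min[OF proper assms(1,5,6)] by blast
  have contF: "continuous_on UNIV (F xs)" for xs
    unfolding F_def[abs_def] using p0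
    by (intro cont_F[where f="\<lambda>_. xs" and g="\<lambda>y. y", simplified]) (auto intro: continuous_on_const continuous_on_id)
  have closedQ: "closed {z. Q xs z}" for xs
    unfolding Q_def by (intro closed_Collect_all closed_Collect_le contF continuous_on_const)
  have contG: "continuous_on UNIV (\<lambda>q::('n \<Rightarrow> 'a) \<times> 'a. F (fst q) (snd q))"
    unfolding F_def using p0
    by (intro cont_F continuous_on_fst continuous_on_snd continuous_on_id)
  have contG2: "continuous_on UNIV (\<lambda>q::('n \<Rightarrow> 'a) \<times> 'a. F (fst q) y)" for y
    unfolding F_def using p0
    by (intro cont_F continuous_on_fst continuous_on_const continuous_on_id)
  have closedA: "closed {xs. \<exists>z. dist (d k) z \<le> r \<and> Q xs z}" for k r
  proof -
    define K where "K = cball (d k) r"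
    define S where "S = {q::('n \<Rightarrow> 'a) \<times> 'a. dist (d k) (snd q) \<le> r \<and> (\<forall>y. F (fst q) (snd q) \<le> F (fst q) y)}"
    have c1: "closed {q::('n \<Rightarrow> 'a) \<times> 'a. dist (d k) (snd q) \<le> r}"
      by (rule closed_Collect_le) (intro continuous_intros)+
    have c2: "closed {q::('n \<Rightarrow> 'a) \<times> 'a. F (fst q) (snd q) \<le> F (fst q) y}" for y
      by (rule closed_Collect_le[OF contG contG2])
    have c3: "closed {q::('n \<Rightarrow> 'a) \<times> 'a. \<forall>y. F (fst q) (snd q) \<le> F (fst q) y}"
      by (rule closed_Collect_all) (rule c2)
    have Scl: "closed S" unfolding S_def
      by (rule closed_Collect_conj[OF c1 c3])
    have "closedin (subtopology euclidean (UNIV \<times> K)) S"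
      unfolding closedin_subtopology
    proof (intro exI conjI)
      show "closedin euclidean S" using Scl closed_closedin by blast
      have "S \<subseteq> UNIV \<times> K"
      proof
        fix q assume "q \<in> S"
        then have "dist (d k) (snd q) \<le> r" unfolding S_def by blast
        then show "q \<in> UNIV \<times> K" unfolding K_def by (cases q) simp
      qed
      then show "S = S \<inter> (UNIV \<times> K)" by blast
    qed
    then have "closedin (prod_topology euclidean (subtopology euclidean K)) S"
      by (simp add: prod_topology_subtopology(2))
    moreover have "closed_map (prod_topology euclidean (subtopology euclidean K)) euclidean fst"
      by (rule closed_map_fst) (rule compact_space_subtopology, simp add: K_def proper)
    ultimately have "closedin euclidean (fst ` S)" unfolding closed_map_def by blast
    moreover have "fst ` S = {xs. \<exists>z. dist (d k) z \<le> r \<and> Q xs z}"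
    proof (intro equalityI subsetI)
      fix xs assume "xs \<in> fst ` S" then show "xs \<in> {xs. \<exists>z. dist (d k) z \<le> r \<and> Q xs z}"
        unfolding S_def Q_def by force
    next
      fix xs assume "xs \<in> {xs. \<exists>z. dist (d k) z \<le> r \<and> Q xs z}"
      then obtain z where "dist (d k) z \<le> r" "Q xs z" by blast
      then have "(xs, z) \<in> S" unfolding S_def Q_def by simp
      then show "xs \<in> fst ` S" by (metis fst_conv image_eqI)
    qed
    ultimately show ?thesis using closed_closedin by metis
  qed
  obtain T :: "('n \<Rightarrow> 'a) \<Rightarrow> 'a" where T: "T \<in> borel_measurable borel" "\<forall>xs. Q xs (T xs)"
    using measurable_selection[OF dense ex cpl closedA closedQ] by blast
  show ?thesis using T unfolding Q_def F_def by blast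
qed

end
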